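(* In the Bayesian online learning setting for $n$-round dynamic inference described in the context, for any online-learned estimation strategy and any round $i$, the parameter $W$ is conditionally independent of the current observation $X_i$ and the estimates $\hat Y^i$ up to round $i$, given the past observations $Z^{i-1}=((X_1,Y_1),\ldots,(X_{i-1},Y_{i-1}))$.
   Context: Setting (Bayesian online learning for $n$-round dynamic inference). $\mathsf X,\mathsf Y,\hat{\mathsf Y},\mathsf W$ are measurable spaces. The following are given: a distribution $P_{X_1}$ on $\mathsf X$; probability transition kernels $K_i(\cdot\mid x,\hat y)$ from $\mathsf X\times\hat{\mathsf Y}$ to $\mathsf X$ for $i=2,\ldots,n$; a parametrized family of kernels $\{P_{Y|X,w}:w\in\mathsf W\}$ from $\mathsf X$ to $\mathsf Y$; and a prior $P_W$ on $\mathsf W$. Write $Z_i=(X_i,Y_i)$. An online-learned estimation strategy is a tuple $(\psi_1,\ldots,\psi_n)$ of maps $\psi_i:(\mathsf X\times\mathsf Y)^{i-1}\times\hat{\mathsf Y}^{i-1}\times\mathsf X\to\hat{\mathsf Y}$. It determines the joint law of $(W,X^n,Y^n,\hat Y^n)$ as follows. $W\sim P_W$. $X_1\sim P_{X_1}$ is independent of $W$. For each $i$: given all previously generated variables, $Y_i\sim P_{Y|X,W}(\cdot\mid X_i,W)$; $\hat Y_i=\psi_i(Z^{i-1},\hat Y^{i-1},X_i)$; and, given all variables generated up to round $i$, $X_{i+1}\sim K_{i+1}(\cdot\mid X_i,\hat Y_i)$. *)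

theory Defs
  imports "HOL-Probability.Probability"
begin

definition cond_prob :: "'a measure \<Rightarrow> 'a measure \<Rightarrow> 'a set \<Rightarrow> 'a \<Rightarrow> real" where
  "cond_prob M F A = real_cond_exp M F (indicator A)"

definition cond_indep :: "'a measure \<Rightarrow> 'a measure \<Rightarrow> 'a measure \<Rightarrow> 'a measure \<Rightarrow> bool" where
  "cond_indep M F G H \<longleftrightarrow>
     (\<forall>A\<in>sets G. \<forall>B\<in>sets H. AE \<omega> in M.
        cond_prob M F (A \<inter> B) \<omega> = cond_prob M F A \<omega> * cond_prob M F B \<omega>)"

definition gen :: "'a measure \<Rightarrow> ('a \<Rightarrow> 'b) \<Rightarrow> 'b measure \<Rightarrow> 'a measure" where
  "gen M f N = vimage_algebra (space M) f N"

end

theory Submission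
  imports Defs
begin

lemma sfs: "prob_space M \<Longrightarrow> subalgebra M F \<Longrightarrow> sigma_finite_subalgebra M F"
  by (intro finite_measure_subalgebra_is_sigma_finite)
     (simp add: finite_measure_subalgebra_def finite_measure_subalgebra_axioms_def prob_space.axioms(1))

lemma dynkin_ce:
  fixes M F L :: "'a measure"
  assumes M: "prob_space M" and sF: "subalgebra M F" and sL: "subalgebra M L" and LF: "sets F \<subseteq> sets L"
    and LE: "sets L = sigma_sets (space M) E" and IE: "Int_stable E" and EP: "E \<subseteq> Pow (space M)"
    and A: "A \<in> sets M"
    and gen: "\<And>D. D \<in> E \<Longrightarrow> (LINT x:D|M. indicator A x) = (LINT x:D|M. real_cond_exp M F (indicator A) x)"
  shows "AE x in M. real_cond_exp M L (indicator A) x = real_cond_exp M F (indicator A) x"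
proof -
  interpret L: sigma_finite_subalgebra M L using sfs[OF M sL] .
  interpret F: sigma_finite_subalgebra M F using sfs[OF M sF] .
  interpret prob_space M by fact
  define g where "g = real_cond_exp M F (indicator A)"
  have intA: "integrable M (indicator A :: 'a \<Rightarrow> real)" using A by (intro integrable_real_indicator) (auto simp: less_top[symmetric])
  have intg: "integrable M g" unfolding g_def by (rule F.real_cond_exp_int(1)[OF intA])
  have gF: "g \<in> borel_measurable F" unfolding g_def by simp
  have sLF: "subalgebra L F" using sF sL LF by (simp add: subalgebra_def)
  have gL: "g \<in> borel_measurable L" by (rule measurable_from_subalg[OF sLF gF])
  have gM: "g \<in> borel_measurable M" by (rule measurable_from_subalg[OF sF gF])
  have LM: "sets L \<subseteq> sets M" using sL by (simp add: subalgebra_def)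
  have P: "(LINT x:D|M. indicator A x) = (LINT x:D|M. g x)" if D: "D \<in> sets L" for D
  proof -
    have "D \<in> sigma_sets (space M) E" using D LE by simp
    with IE EP show ?thesis
    proof (induction rule: sigma_sets_induct_disjoint)
      case (basic D) then show ?case using gen g_def by simp
    next
      case empty then show ?case by (simp add: set_lebesgue_integral_def)
    next
      case (compl D)
      have DM: "D \<in> sets M" using compl(1) LE LM by auto
      have e1: "(LINT x:(space M - D)|M. f x) = (LINT x|M. f x) - (LINT x:D|M. f x)"
        if fi: "integrable M f" for f :: "'a \<Rightarrow> real"
      proof -
        have "(LINT x:(space M - D)|M. f x) = (LINT x|M. f x - indicator D x * f x)"
          unfolding set_lebesgue_integral_def
          by (rule Bochner_Integration.integral_cong) (auto split: split_indicator)
        also have "\<dots> = (LINT x|M. f x) - (LINT x|M. indicator D x * f x)"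
          using integrable_mult_indicator[OF DM fi] by (intro Bochner_Integration.integral_diff[OF fi]) simp
        finally show ?thesis by (simp add: set_lebesgue_integral_def)
      qed
      have "(LINT x|M. g x) = (LINT x|M. indicator A x)"
        unfolding g_def by (rule F.real_cond_exp_int(2)[OF intA])
      then show ?case using e1[OF intA] e1[OF intg] compl(2) by simp
    next
      case (union D)
      have DM: "\<And>i. D i \<in> sets M" using union(2) LE LM by auto
      have dj: "\<And>i j. i \<noteq> j \<Longrightarrow> D i \<inter> D j = {}" using union(1) by (auto simp: disjoint_family_on_def)
      have UM: "(\<Union>i. D i) \<in> sets M" using DM by auto
      have si: "set_integrable M (\<Union>i. D i) f" if "integrable M f" for f :: "'a \<Rightarrow> real"
        unfolding set_integrable_def using integrable_mult_indicator[OF UM that] by simp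
      show ?case
        using lebesgue_integral_countable_add[OF DM dj si[OF intA]]
          lebesgue_integral_countable_add[OF DM dj si[OF intg]] union(3) by simp
    qed
  qed
  have "AE x in M. real_cond_exp M L (indicator A) x = g x"
    by (rule L.real_cond_exp_charact[OF P intA intg gL])
  then show ?thesis unfolding g_def .
qed

lemma ci_from_L:
  fixes M F L :: "'a measure"
  assumes M: "prob_space M" and sF: "subalgebra M F" and sL: "subalgebra M L" and LF: "sets F \<subseteq> sets L"
    and A: "A \<in> sets M"
    and eq: "AE x in M. real_cond_exp M L (indicator A) x = real_cond_exp M F (indicator A) x"
    and B: "B \<in> sets L"
  shows "AE x in M. cond_prob M F (A \<inter> B) x = cond_prob M F A x * cond_prob M F B x"
proof -
  interpret L: sigma_finite_subalgebra M L using sfs[OF M sL] .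
  interpret F: sigma_finite_subalgebra M F using sfs[OF M sF] .
  interpret prob_space M by fact
  have sLF: "subalgebra L F" using sF sL LF by (simp add: subalgebra_def)
  define gA where "gA = real_cond_exp M F (indicator A)"
  have intA: "integrable M (indicator A :: 'a \<Rightarrow> real)" using A by (intro integrable_real_indicator) (auto simp: less_top[symmetric])
  have BM: "B \<in> sets M" using B sL by (auto simp: subalgebra_def)
  have intB: "integrable M (indicator B :: 'a \<Rightarrow> real)" using BM by (intro integrable_real_indicator) (auto simp: less_top[symmetric])
  have intg: "integrable M gA" unfolding gA_def by (rule F.real_cond_exp_int(1)[OF intA])
  have gF: "gA \<in> borel_measurable F" unfolding gA_def by simp
  have gM: "gA \<in> borel_measurable M" unfolding gA_def by simp
  have indAB: "indicator (A \<inter> B) = (\<lambda>x. indicator B x * indicator A x :: real)"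
    by (auto simp: fun_eq_iff split: split_indicator)
  have intBA: "integrable M (\<lambda>x. indicator B x * indicator A x :: real)"
    using integrable_mult_indicator[OF BM intA] by simp
  have BL: "(indicator B :: 'a \<Rightarrow> real) \<in> borel_measurable L" using B by simp
  have AM: "(indicator A :: 'a \<Rightarrow> real) \<in> borel_measurable M" using A by simp
  have BMm: "(indicator B :: 'a \<Rightarrow> real) \<in> borel_measurable M" using BM by simp
  have e1: "AE x in M. real_cond_exp M F (real_cond_exp M L (\<lambda>x. indicator B x * indicator A x)) x
      = real_cond_exp M F (\<lambda>x. indicator B x * indicator A x) x"
    by (rule F.real_cond_exp_nested_subalg[OF sL sLF intBA])
  have e2: "AE x in M. real_cond_exp M L (\<lambda>x. indicator B x * indicator A x) x = indicator B x * real_cond_exp M L (indicator A) x"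
    by (rule L.real_cond_exp_mult[OF BL AM intBA])
  have e3: "AE x in M. real_cond_exp M L (\<lambda>x. indicator B x * indicator A x) x = indicator B x * gA x"
    using e2 eq unfolding gA_def by eventually_elim simp
  have e4: "AE x in M. real_cond_exp M F (real_cond_exp M L (\<lambda>x. indicator B x * indicator A x)) x
      = real_cond_exp M F (\<lambda>x. indicator B x * gA x) x"
    by (rule F.real_cond_exp_cong[OF e3]) (use BMm gM in auto)
  have e5: "AE x in M. real_cond_exp M F (\<lambda>x. gA x * indicator B x) x = gA x * real_cond_exp M F (indicator B) x"
    by (rule F.real_cond_exp_mult[OF gF BMm]) (rule integrable_real_mult_indicator[OF BM intg])
  have e6: "(\<lambda>x. indicator B x * gA x) = (\<lambda>x. gA x * indicator B x)" by (simp add: mult.commute fun_eq_iff)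
  have e5': "AE x in M. real_cond_exp M F (\<lambda>x. indicator B x * gA x) x = gA x * real_cond_exp M F (indicator B) x"
    using e5 unfolding e6 .
  show ?thesis
    using e1 e4 e5' unfolding cond_prob_def indAB gA_def[symmetric] by eventually_elim simp
qed

lemma gen_step:
  fixes M F :: "'a measure" and k :: "'a \<Rightarrow> real"
  assumes M: "prob_space M" and sF: "subalgebra M F"
    and S: "S \<in> sets M" and A: "A \<in> sets M" and C: "C \<in> sets F"
    and kF: "k \<in> borel_measurable F" and kb: "\<And>x. \<bar>k x\<bar> \<le> 1"
    and hA: "(\<integral>x. indicator C x * indicator A x * indicator S x \<partial>M) = (\<integral>x. indicator C x * indicator A x * k x \<partial>M)"
    and hO: "\<And>C. C \<in> sets F \<Longrightarrow> (\<integral>x. indicator C x * indicator S x \<partial>M) = (\<integral>x. indicator C x * k x \<partial>M)"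
  shows "(LINT x:(C \<inter> S)|M. indicator A x) = (LINT x:(C \<inter> S)|M. real_cond_exp M F (indicator A) x)"
proof -
  interpret F: sigma_finite_subalgebra M F using sfs[OF M sF] .
  interpret prob_space M by fact
  define gA where "gA = real_cond_exp M F (indicator A)"
  have intA: "integrable M (indicator A :: 'a \<Rightarrow> real)" using A by (intro integrable_real_indicator) (auto simp: less_top[symmetric])
  have intS: "integrable M (indicator S :: 'a \<Rightarrow> real)" using S by (intro integrable_real_indicator) (auto simp: less_top[symmetric])
  have intg: "integrable M gA" unfolding gA_def by (rule F.real_cond_exp_int(1)[OF intA])
  have gF: "gA \<in> borel_measurable F" unfolding gA_def by simp
  have gM: "gA \<in> borel_measurable M" unfolding gA_def by simp
  have kM: "k \<in> borel_measurable M" by (rule measurable_from_subalg[OF sF kF])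
  have CM: "C \<in> sets M" using C sF by (auto simp: subalgebra_def)
  have intk: "integrable M k" by (rule integrable_const_bound[where B=1]) (use kb kM in auto)
  have SMm: "(indicator S :: 'a \<Rightarrow> real) \<in> borel_measurable M" using S by simp
  have AMm: "(indicator A :: 'a \<Rightarrow> real) \<in> borel_measurable M" using A by simp
  have CF: "(indicator C :: 'a \<Rightarrow> real) \<in> borel_measurable F" using C by simp
  have eS: "AE x in M. real_cond_exp M F (indicator S) x = k x"
  proof (rule F.real_cond_exp_charact[OF _ intS intk kF])
    fix C' assume C': "C' \<in> sets F"
    show "(LINT x:C'|M. indicator S x) = (LINT x:C'|M. k x)"
      using hO[OF C'] by (simp add: set_lebesgue_integral_def)
  qed
  have "(LINT x:(C \<inter> S)|M. indicator A x) = (\<integral>x. indicator C x * indicator A x * (indicator S x :: real) \<partial>M)"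
    unfolding set_lebesgue_integral_def
    by (rule Bochner_Integration.integral_cong) (auto split: split_indicator)
  also have "\<dots> = (\<integral>x. indicator C x * indicator A x * k x \<partial>M)" by (rule hA)
  also have "\<dots> = (\<integral>x. (indicator C x * k x) * indicator A x \<partial>M)"
    by (rule Bochner_Integration.integral_cong) auto
  also have "\<dots> = (\<integral>x. (indicator C x * k x) * gA x \<partial>M)"
    unfolding gA_def
  proof (rule F.real_cond_exp_intg(2)[symmetric])
    show "integrable M (\<lambda>x. indicator C x * k x * indicator A x)"
      by (rule integrable_const_bound[where B=1]) (use kb kM A CM in \<open>auto split: split_indicator\<close>)
    show "(\<lambda>x. indicator C x * k x) \<in> borel_measurable F" using CF kF by simp
    show "(indicator A :: 'a \<Rightarrow> real) \<in> borel_measurable M" using AMm .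
  qed
  also have "\<dots> = (\<integral>x. (indicator C x * gA x) * k x \<partial>M)"
    by (rule Bochner_Integration.integral_cong) auto
  also have "\<dots> = (\<integral>x. (indicator C x * gA x) * real_cond_exp M F (indicator S) x \<partial>M)"
    by (rule integral_cong_AE) (use eS gM kM CM in auto)
  also have "\<dots> = (\<integral>x. (indicator C x * gA x) * indicator S x \<partial>M)"
  proof (rule F.real_cond_exp_intg(2))
    show "integrable M (\<lambda>x. indicator C x * gA x * indicator S x)"
      using integrable_real_mult_indicator[OF S integrable_mult_indicator[OF CM intg]] by simp
    show "(\<lambda>x. indicator C x * gA x) \<in> borel_measurable F" using CF gF by simp
    show "(indicator S :: 'a \<Rightarrow> real) \<in> borel_measurable M" using SMm .
  qed
  also have "\<dots> = (LINT x:(C \<inter> S)|M. gA x)"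
    unfolding set_lebesgue_integral_def
    by (rule Bochner_Integration.integral_cong) (auto split: split_indicator)
  finally show ?thesis unfolding gA_def .
qed

lemma ci_main:
  fixes M F G H :: "'a measure" and X :: "'a \<Rightarrow> 'x" and MX :: "'x measure"
  assumes M: "prob_space M" and sF: "subalgebra M F" and X: "X \<in> measurable M MX"
    and G: "sets G \<subseteq> sets M" "space M \<in> sets G"
    and kern: "\<And>B. B \<in> sets MX \<Longrightarrow> \<exists>k::'a \<Rightarrow> real. k \<in> borel_measurable F \<and> (\<forall>x. \<bar>k x\<bar> \<le> 1) \<and>
       (\<forall>A\<in>sets G. \<forall>C\<in>sets F. (\<integral>x. indicator C x * indicator A x * indicator {\<omega>\<in>space M. X \<omega> \<in> B} x \<partial>M)
            = (\<integral>x. indicator C x * indicator A x * k x \<partial>M))"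
    and H: "sets H \<subseteq> sigma_sets (space M) {C \<inter> {\<omega>\<in>space M. X \<omega> \<in> B} | C B. C \<in> sets F \<and> B \<in> sets MX}"
  shows "cond_indep M F G H"
  unfolding cond_indep_def
proof (intro ballI)
  fix A B' assume A: "A \<in> sets G" and B': "B' \<in> sets H"
  define E where "E = {C \<inter> {\<omega>\<in>space M. X \<omega> \<in> B} | C B. C \<in> sets F \<and> B \<in> sets MX}"
  define L where "L = sigma (space M) E"
  have FM: "sets F \<subseteq> sets M" using sF by (simp add: subalgebra_def)
  have EM: "E \<subseteq> sets M" unfolding E_def using FM X by auto
  have EP: "E \<subseteq> Pow (space M)" using EM sets.sets_into_space by auto
  have LE: "sets L = sigma_sets (space M) E" unfolding L_def using EP by simp
  have spL: "space L = space M" unfolding L_def using EP by simp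
  have sL: "subalgebra M L" unfolding subalgebra_def using spL LE sets.sigma_sets_subset[OF EM] by simp
  have LF: "sets F \<subseteq> sets L"
  proof
    fix C assume C: "C \<in> sets F"
    have "C = C \<inter> {\<omega>\<in>space M. X \<omega> \<in> space MX}"
      using C FM sets.sets_into_space measurable_space[OF X] by blast
    then have "C \<in> E" unfolding E_def using C by blast
    then show "C \<in> sets L" using LE by auto
  qed
  have IE: "Int_stable E"
  proof (rule Int_stableI)
    fix a b assume "a \<in> E" "b \<in> E"
    then obtain C1 B1 C2 B2 where "a = C1 \<inter> {\<omega>\<in>space M. X \<omega> \<in> B1}" "C1 \<in> sets F" "B1 \<in> sets MX"
      "b = C2 \<inter> {\<omega>\<in>space M. X \<omega> \<in> B2}" "C2 \<in> sets F" "B2 \<in> sets MX" unfolding E_def by blast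
    then have "a \<inter> b = (C1 \<inter> C2) \<inter> {\<omega>\<in>space M. X \<omega> \<in> B1 \<inter> B2}" "C1 \<inter> C2 \<in> sets F" "B1 \<inter> B2 \<in> sets MX"
      by auto
    then show "a \<inter> b \<in> E" unfolding E_def by blast
  qed
  have AM: "A \<in> sets M" using A G by auto
  have gen: "(LINT x:D|M. indicator A x) = (LINT x:D|M. real_cond_exp M F (indicator A) x)" if D: "D \<in> E" for D
  proof -
    obtain C B where DCB: "D = C \<inter> {\<omega>\<in>space M. X \<omega> \<in> B}" and C: "C \<in> sets F" and B: "B \<in> sets MX"
      using D unfolding E_def by blast
    obtain k :: "'a \<Rightarrow> real" where kF: "k \<in> borel_measurable F" and kb: "\<forall>x. \<bar>k x\<bar> \<le> 1" and
      kk: "\<forall>A\<in>sets G. \<forall>C\<in>sets F. (\<integral>x. indicator C x * indicator A x * indicator {\<omega>\<in>space M. X \<omega> \<in> B} x \<partial>M)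
            = (\<integral>x. indicator C x * indicator A x * k x \<partial>M)"
      using kern[OF B] by blast
    have SM: "{\<omega>\<in>space M. X \<omega> \<in> B} \<in> sets M" using X B by measurable
    have hO: "(\<integral>x. indicator C' x * indicator {\<omega>\<in>space M. X \<omega> \<in> B} x \<partial>M) = (\<integral>x. indicator C' x * k x \<partial>M)"
      if C': "C' \<in> sets F" for C'
    proof -
      have "(\<integral>x. indicator C' x * (indicator {\<omega>\<in>space M. X \<omega> \<in> B} x :: real) \<partial>M)
          = (\<integral>x. indicator C' x * indicator (space M) x * indicator {\<omega>\<in>space M. X \<omega> \<in> B} x \<partial>M)"
        by (rule Bochner_Integration.integral_cong) auto
      also have "\<dots> = (\<integral>x. indicator C' x * indicator (space M) x * k x \<partial>M)"
        using kk G(2) C' by blast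
      also have "\<dots> = (\<integral>x. indicator C' x * k x \<partial>M)"
        by (rule Bochner_Integration.integral_cong) auto
      finally show ?thesis .
    qed
    show ?thesis unfolding DCB
      by (rule gen_step[OF M sF SM AM C kF]) (use kb kk A C hO in auto)
  qed
  have eq: "AE x in M. real_cond_exp M L (indicator A) x = real_cond_exp M F (indicator A) x"
    by (rule dynkin_ce[OF M sF sL LF LE IE EP AM gen])
  have B'L: "B' \<in> sets L" using B' H LE unfolding E_def by auto
  show "AE \<omega> in M. cond_prob M F (A \<inter> B') \<omega> = cond_prob M F A \<omega> * cond_prob M F B' \<omega>"
    by (rule ci_from_L[OF M sF sL LF AM eq B'L])
qed

lemma gen_space[simp]: "space (gen M f N) = space M"
  unfolding gen_def by simp

lemma gen_sub:
  assumes f: "f \<in> measurable L N" and sp: "space L = space M"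
  shows "sets (gen M f N) \<subseteq> sets L"
proof -
  have fs: "f \<in> space M \<rightarrow> space N" using measurable_space[OF f] sp by auto
  show ?thesis
    unfolding gen_def sets_vimage_algebra2[OF fs]
    using measurable_sets[OF f] sp by auto
qed

lemma gen_subalg: "f \<in> measurable M N \<Longrightarrow> subalgebra M (gen M f N)"
  using gen_sub[of f M N M] by (simp add: subalgebra_def)

lemma gen_meas:
  assumes f: "f \<in> measurable M N" and g: "g \<in> measurable N P" and h: "\<And>\<omega>. \<omega> \<in> space M \<Longrightarrow> h \<omega> = g (f \<omega>)"
  shows "h \<in> measurable (gen M f N) P"
proof -
  have fs: "f \<in> space M \<rightarrow> space N" using measurable_space[OF f] by auto
  have "(\<lambda>\<omega>. g (f \<omega>)) \<in> measurable (gen M f N) P"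
    unfolding gen_def by (rule measurable_compose[OF measurable_vimage_algebra1[OF fs] g])
  then show ?thesis by (subst measurable_cong[where g="\<lambda>\<omega>. g (f \<omega>)"]) (use h in auto)
qed

lemma Yh_meas_gen:
  fixes \<psi> :: "nat \<Rightarrow> (nat \<Rightarrow> 'x \<times> 'y) \<Rightarrow> (nat \<Rightarrow> 'yh) \<Rightarrow> 'x \<Rightarrow> 'yh"
  assumes \<psi>_meas: "\<And>i. i \<in> {1..n} \<Longrightarrow>
       (\<lambda>(z, yh, x). \<psi> i z yh x)
         \<in> measurable (PiM {1..<i} (\<lambda>_. MX \<Otimes>\<^sub>M MY) \<Otimes>\<^sub>M PiM {1..<i} (\<lambda>_. MYh) \<Otimes>\<^sub>M MX) MYh"
    and Yh_def: "\<And>i \<omega>. i \<in> {1..n} \<Longrightarrow> \<omega> \<in> space M \<Longrightarrow>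
       Yh i \<omega> = \<psi> i (restrict (\<lambda>j. (X j \<omega>, Y j \<omega>)) {1..<i}) (restrict (\<lambda>j. Yh j \<omega>) {1..<i}) (X i \<omega>)"
    and sp: "space L = space M" and p: "p \<le> n"
    and Xm: "\<And>l. l \<in> {1..p} \<Longrightarrow> X l \<in> measurable L MX"
    and Ym: "\<And>l. l \<in> {1..<p} \<Longrightarrow> Y l \<in> measurable L MY"
  shows "m \<in> {1..p} \<Longrightarrow> Yh m \<in> measurable L MYh"
proof (induction m rule: less_induct)
  case (less m)
  have m: "m \<in> {1..n}" using less.prems p by auto
  have 1: "(\<lambda>\<omega>. (restrict (\<lambda>j. (X j \<omega>, Y j \<omega>)) {1..<m}, restrict (\<lambda>j. Yh j \<omega>) {1..<m}, X m \<omega>))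
     \<in> measurable L (PiM {1..<m} (\<lambda>_. MX \<Otimes>\<^sub>M MY) \<Otimes>\<^sub>M PiM {1..<m} (\<lambda>_. MYh) \<Otimes>\<^sub>M MX)"
    by (intro measurable_Pair measurable_restrict) (use Xm Ym less in auto)
  have "(\<lambda>\<omega>. \<psi> m (restrict (\<lambda>j. (X j \<omega>, Y j \<omega>)) {1..<m}) (restrict (\<lambda>j. Yh j \<omega>) {1..<m}) (X m \<omega>)) \<in> measurable L MYh"
    using measurable_compose[OF 1 \<psi>_meas[OF m]] by simp
  then show ?case by (subst measurable_cong[where g="\<lambda>\<omega>. \<psi> m (restrict (\<lambda>j. (X j \<omega>, Y j \<omega>)) {1..<m}) (restrict (\<lambda>j. Yh j \<omega>) {1..<m}) (X m \<omega>)"]) (use Yh_def m sp in auto)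
qed

theorem lemma6:
  fixes M :: "'a measure"
    and MX :: "'x measure" and MY :: "'y measure" and MYh :: "'yh measure" and MW :: "'w measure"
    and n :: nat
    and PX1 :: "'x measure" and PW :: "'w measure"
    and K :: "nat \<Rightarrow> 'x \<Rightarrow> 'yh \<Rightarrow> 'x measure"
    and PY :: "'w \<Rightarrow> 'x \<Rightarrow> 'y measure"
    and \<psi> :: "nat \<Rightarrow> (nat \<Rightarrow> 'x \<times> 'y) \<Rightarrow> (nat \<Rightarrow> 'yh) \<Rightarrow> 'x \<Rightarrow> 'yh"
    and W :: "'a \<Rightarrow> 'w" and X :: "nat \<Rightarrow> 'a \<Rightarrow> 'x" and Y :: "nat \<Rightarrow> 'a \<Rightarrow> 'y"
    and Yh :: "nat \<Rightarrow> 'a \<Rightarrow> 'yh"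
  assumes PX1: "prob_space PX1" "sets PX1 = sets MX"
    and PW: "prob_space PW" "sets PW = sets MW"
    and K_kernel: "\<And>i. i \<in> {2..n} \<Longrightarrow> (\<lambda>(x, yh). K i x yh) \<in> measurable (MX \<Otimes>\<^sub>M MYh) (prob_algebra MX)"
    and PY_kernel: "(\<lambda>(x, w). PY w x) \<in> measurable (MX \<Otimes>\<^sub>M MW) (prob_algebra MY)"
    and \<psi>_meas: "\<And>i. i \<in> {1..n} \<Longrightarrow>
       (\<lambda>(z, yh, x). \<psi> i z yh x)
         \<in> measurable (PiM {1..<i} (\<lambda>_. MX \<Otimes>\<^sub>M MY) \<Otimes>\<^sub>M PiM {1..<i} (\<lambda>_. MYh) \<Otimes>\<^sub>M MX) MYh"
    and M: "prob_space M"
    and W_rv: "W \<in> measurable M MW"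
    and X_rv: "\<And>i. i \<in> {1..n} \<Longrightarrow> X i \<in> measurable M MX"
    and Y_rv: "\<And>i. i \<in> {1..n} \<Longrightarrow> Y i \<in> measurable M MY"
    and Yh_rv: "\<And>i. i \<in> {1..n} \<Longrightarrow> Yh i \<in> measurable M MYh"
    and W_law: "distr M MW W = PW"
    and X1_law: "distr M MX (X 1) = PX1"
    and W_X1_indep: "distr M (MW \<Otimes>\<^sub>M MX) (\<lambda>\<omega>. (W \<omega>, X 1 \<omega>)) = PW \<Otimes>\<^sub>M PX1"
    and Y_law: "\<And>i B. i \<in> {1..n} \<Longrightarrow> B \<in> sets MY \<Longrightarrow>
       AE \<omega> in M.
         cond_prob M
           (gen M (\<lambda>\<omega>. (W \<omega>, restrict (\<lambda>j. X j \<omega>) {1..i}, restrict (\<lambda>j. Y j \<omega>) {1..<i},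
                         restrict (\<lambda>j. Yh j \<omega>) {1..<i}))
              (MW \<Otimes>\<^sub>M PiM {1..i} (\<lambda>_. MX) \<Otimes>\<^sub>M PiM {1..<i} (\<lambda>_. MY) \<Otimes>\<^sub>M PiM {1..<i} (\<lambda>_. MYh)))
           {\<omega>\<in>space M. Y i \<omega> \<in> B} \<omega>
         = measure (PY (W \<omega>) (X i \<omega>)) B"
    and Yh_def: "\<And>i \<omega>. i \<in> {1..n} \<Longrightarrow> \<omega> \<in> space M \<Longrightarrow>
       Yh i \<omega> = \<psi> i (restrict (\<lambda>j. (X j \<omega>, Y j \<omega>)) {1..<i}) (restrict (\<lambda>j. Yh j \<omega>) {1..<i}) (X i \<omega>)"
    and X_law: "\<And>i B. i \<in> {1..<n} \<Longrightarrow> B \<in> sets MX \<Longrightarrow>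
       AE \<omega> in M.
         cond_prob M
           (gen M (\<lambda>\<omega>. (W \<omega>, restrict (\<lambda>j. X j \<omega>) {1..i}, restrict (\<lambda>j. Y j \<omega>) {1..i},
                         restrict (\<lambda>j. Yh j \<omega>) {1..i}))
              (MW \<Otimes>\<^sub>M PiM {1..i} (\<lambda>_. MX) \<Otimes>\<^sub>M PiM {1..i} (\<lambda>_. MY) \<Otimes>\<^sub>M PiM {1..i} (\<lambda>_. MYh)))
           {\<omega>\<in>space M. X (Suc i) \<omega> \<in> B} \<omega>
         = measure (K (Suc i) (X i \<omega>) (Yh i \<omega>)) B"
    and i: "i \<in> {1..n}"
  shows "cond_indep M
           (gen M (\<lambda>\<omega>. restrict (\<lambda>j. (X j \<omega>, Y j \<omega>)) {1..<i}) (PiM {1..<i} (\<lambda>_. MX \<Otimes>\<^sub>M MY)))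
           (gen M W MW)
           (gen M (\<lambda>\<omega>. (X i \<omega>, restrict (\<lambda>j. Yh j \<omega>) {1..i})) (MX \<Otimes>\<^sub>M PiM {1..i} (\<lambda>_. MYh)))"
proof -
  interpret P: prob_space M by (rule M)
  define Zp where "Zp = (\<lambda>\<omega>. restrict (\<lambda>j. (X j \<omega>, Y j \<omega>)) {1..<i})"
  define NZ where "NZ = PiM {1..<i} (\<lambda>_. MX \<Otimes>\<^sub>M MY)"
  define F where "F = gen M Zp NZ"
  define G where "G = gen M W MW"
  define H where "H = gen M (\<lambda>\<omega>. (X i \<omega>, restrict (\<lambda>j. Yh j \<omega>) {1..i})) (MX \<Otimes>\<^sub>M PiM {1..i} (\<lambda>_. MYh))"
  have i1: "1 \<le> i" "i \<le> n" using i by auto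
  have Zp_M: "Zp \<in> measurable M NZ"
    unfolding Zp_def NZ_def
    by (intro measurable_restrict measurable_Pair) (use X_rv Y_rv i1 in auto)
  have sF: "subalgebra M F" unfolding F_def by (rule gen_subalg[OF Zp_M])
  have spF: "space F = space M" unfolding F_def by simp
  have XF: "X l \<in> measurable F MX" if l: "l \<in> {1..<i}" for l
    unfolding F_def
  proof (rule gen_meas[OF Zp_M, where g="\<lambda>z. fst (z l)"])
    show "(\<lambda>z. fst (z l)) \<in> measurable NZ MX" unfolding NZ_def
      by (rule measurable_compose[OF measurable_component_singleton[OF l] measurable_fst])
    show "\<And>\<omega>. \<omega> \<in> space M \<Longrightarrow> X l \<omega> = fst (Zp \<omega> l)" using l by (simp add: Zp_def)
  qed
  have YF: "Y l \<in> measurable F MY" if l: "l \<in> {1..<i}" for l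
    unfolding F_def
  proof (rule gen_meas[OF Zp_M, where g="\<lambda>z. snd (z l)"])
    show "(\<lambda>z. snd (z l)) \<in> measurable NZ MY" unfolding NZ_def
      by (rule measurable_compose[OF measurable_component_singleton[OF l] measurable_snd])
    show "\<And>\<omega>. \<omega> \<in> space M \<Longrightarrow> Y l \<omega> = snd (Zp \<omega> l)" using l by (simp add: Zp_def)
  qed
  have YhF: "Yh l \<in> measurable F MYh" if l: "l \<in> {1..<i}" for l
  proof (rule Yh_meas_gen[OF \<psi>_meas Yh_def spF, where p="i - 1"])
    show "i - 1 \<le> n" using i1 by simp
    show "\<And>l. l \<in> {1..i - 1} \<Longrightarrow> X l \<in> measurable F MX" using XF by auto
    show "\<And>l. l \<in> {1..<i - 1} \<Longrightarrow> Y l \<in> measurable F MY" using YF by auto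
    show "l \<in> {1..i - 1}" using l by auto
  qed (auto)
  define E where "E = {C \<inter> {\<omega>\<in>space M. X i \<omega> \<in> B} | C B. C \<in> sets F \<and> B \<in> sets MX}"
  have HE: "sets H \<subseteq> sigma_sets (space M) E"
  proof -
    define L where "L = sigma (space M) E"
    have FM: "sets F \<subseteq> sets M" using sF by (simp add: subalgebra_def)
    have Xi: "X i \<in> measurable M MX" using X_rv i by simp
    have EM: "E \<subseteq> sets M" unfolding E_def using FM Xi by auto
    have EP: "E \<subseteq> Pow (space M)" using EM sets.sets_into_space by auto
    have LE: "sets L = sigma_sets (space M) E" unfolding L_def using EP by simp
    have spL: "space L = space M" unfolding L_def using EP by simp
    have OF: "space M \<in> sets F" using sets.top[of F] spF by simp
    have LF: "sets F \<subseteq> sets L"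
    proof
      fix C assume C: "C \<in> sets F"
      have "C = C \<inter> {\<omega>\<in>space M. X i \<omega> \<in> space MX}"
        using C FM sets.sets_into_space measurable_space[OF Xi] by blast
      then have "C \<in> E" unfolding E_def using C by blast
      then show "C \<in> sets L" using LE by auto
    qed
    have sLF: "subalgebra L F" using LF spL spF by (simp add: subalgebra_def)
    have XiL: "X i \<in> measurable L MX"
    proof (rule measurableI)
      show "\<And>x. x \<in> space L \<Longrightarrow> X i x \<in> space MX" using measurable_space[OF Xi] spL by auto
      fix B assume B: "B \<in> sets MX"
      have "X i -` B \<inter> space L = space M \<inter> {\<omega>\<in>space M. X i \<omega> \<in> B}" using spL by auto
      also have "\<dots> \<in> E" unfolding E_def using OF B by blast
      finally show "X i -` B \<inter> space L \<in> sets L" using LE by auto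
    qed
    have XL: "X l \<in> measurable L MX" if "l \<in> {1..i}" for l
    proof (cases "l = i")
      case True then show ?thesis using XiL by simp
    next
      case False then show ?thesis using that measurable_from_subalg[OF sLF XF] by auto
    qed
    have YL: "Y l \<in> measurable L MY" if "l \<in> {1..<i}" for l
      using that measurable_from_subalg[OF sLF YF] by auto
    have YhL: "Yh l \<in> measurable L MYh" if "l \<in> {1..i}" for l
      by (rule Yh_meas_gen[OF \<psi>_meas Yh_def spL i1(2) XL YL that])
    have "(\<lambda>\<omega>. (X i \<omega>, restrict (\<lambda>j. Yh j \<omega>) {1..i})) \<in> measurable L (MX \<Otimes>\<^sub>M PiM {1..i} (\<lambda>_. MYh))"
      by (intro measurable_Pair measurable_restrict XiL YhL)
    from gen_sub[OF this spL] show ?thesis unfolding H_def LE .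
  qed
  have kern: "\<exists>k::'a \<Rightarrow> real. k \<in> borel_measurable F \<and> (\<forall>x. \<bar>k x\<bar> \<le> 1) \<and>
       (\<forall>A\<in>sets G. \<forall>C\<in>sets F. (\<integral>x. indicator C x * indicator A x * indicator {\<omega>\<in>space M. X i \<omega> \<in> B} x \<partial>M)
            = (\<integral>x. indicator C x * indicator A x * k x \<partial>M))" if B: "B \<in> sets MX" for B
  proof (cases "i = 1")
    case True
    define S where "S = {\<omega>\<in>space M. X 1 \<omega> \<in> B}"
    have X1: "X 1 \<in> measurable M MX" using X_rv i1 by simp
    have SM: "S \<in> sets M" unfolding S_def using X1 B by measurable
    have Wfs: "W \<in> space M \<rightarrow> space MW" using measurable_space[OF W_rv] by auto
    have Zpfs: "Zp \<in> space M \<rightarrow> space NZ" using measurable_space[OF Zp_M] by auto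
    have Zc: "Zp \<omega> = (\<lambda>_. undefined)" for \<omega> unfolding Zp_def True by (auto simp: fun_eq_iff)
    have Cs: "C = {} \<or> C = space M" if C: "C \<in> sets F" for C
    proof -
      from C obtain A' where "C = Zp -` A' \<inter> space M"
        unfolding F_def gen_def sets_vimage_algebra2[OF Zpfs] by blast
      then show ?thesis using Zc by (cases "(\<lambda>_. undefined) \<in> A'") auto
    qed
    have indep: "measure M (A \<inter> S) = measure M A * measure M S" if A: "A \<in> sets G" for A
    proof -
      from A obtain A0 where A0: "A0 \<in> sets MW" and AA: "A = W -` A0 \<inter> space M"
        unfolding G_def gen_def sets_vimage_algebra2[OF Wfs] by blast
      interpret PX: prob_space PX1 by (rule PX1(1))
      have WX: "(\<lambda>\<omega>. (W \<omega>, X 1 \<omega>)) \<in> measurable M (MW \<Otimes>\<^sub>M MX)" using W_rv X1 by measurable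
      have "A \<inter> S = (\<lambda>\<omega>. (W \<omega>, X 1 \<omega>)) -` (A0 \<times> B) \<inter> space M" unfolding AA S_def by auto
      then have "measure M (A \<inter> S) = measure (distr M (MW \<Otimes>\<^sub>M MX) (\<lambda>\<omega>. (W \<omega>, X 1 \<omega>))) (A0 \<times> B)"
        using measure_distr[OF WX, of "A0 \<times> B"] A0 B by simp
      also have "\<dots> = measure (PW \<Otimes>\<^sub>M PX1) (A0 \<times> B)" using W_X1_indep by simp
      also have "\<dots> = measure PW A0 * measure PX1 B"
        using PX.emeasure_pair_measure_Times[of A0 PW B] A0 B PW(2) PX1(2)
        by (simp add: measure_def enn2real_mult)
      also have "measure PW A0 = measure M A"
        using measure_distr[OF W_rv A0] W_law AA by simp
      also have "measure PX1 B = measure M S"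
        using measure_distr[OF X1 B] X1_law S_def by (simp add: vimage_def Int_def conj_commute)
      finally show ?thesis .
    qed
    show ?thesis
    proof (intro exI conjI ballI allI)
      show "(\<lambda>_. measure M S) \<in> borel_measurable F" by simp
      show "\<bar>measure M S\<bar> \<le> 1" for x by simp
      fix A C assume A: "A \<in> sets G" and C: "C \<in> sets F"
      have AM: "A \<in> sets M" using A gen_sub[OF W_rv] unfolding G_def by auto
      show "(\<integral>x. indicator C x * indicator A x * indicator {\<omega>\<in>space M. X i \<omega> \<in> B} x \<partial>M)
            = (\<integral>x. indicator C x * indicator A x * measure M S \<partial>M)"
      proof (cases "C = {}")
        case True then show ?thesis by simp
      next
        case False
        then have CO: "C = space M" using Cs[OF C] by simp
        have "(\<integral>x. indicator C x * indicator A x * indicator {\<omega>\<in>space M. X i \<omega> \<in> B} x \<partial>M)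
            = (\<integral>x. (indicator (A \<inter> S) x :: real) \<partial>M)"
          unfolding CO S_def \<open>i = 1\<close> by (rule Bochner_Integration.integral_cong) (auto split: split_indicator)
        also have "\<dots> = measure M (A \<inter> S)" using AM SM by (simp add: Int_absorb2 sets.sets_into_space)
        also have "\<dots> = (\<integral>x. indicator A x * measure M S \<partial>M)"
          using indep[OF A] AM by (simp add: Int_absorb2 sets.sets_into_space)
        also have "\<dots> = (\<integral>x. indicator C x * indicator A x * measure M S \<partial>M)"
          unfolding CO by (rule Bochner_Integration.integral_cong) (auto split: split_indicator)
        finally show ?thesis .
      qed
    qed
  next
    case False
    define j where "j = i - 1"
    have sj: "Suc j = i" using False i1 unfolding j_def by simp
    have j: "j \<in> {1..<n}" using False i1 unfolding j_def by auto
    have ji: "j \<in> {1..<i}" using sj j by auto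
    have i2: "i \<in> {2..n}" using False i1 by auto
    define Vj where "Vj = (\<lambda>\<omega>. (W \<omega>, restrict (\<lambda>l. X l \<omega>) {1..j}, restrict (\<lambda>l. Y l \<omega>) {1..j},
                         restrict (\<lambda>l. Yh l \<omega>) {1..j}))"
    define NV where "NV = (MW \<Otimes>\<^sub>M PiM {1..j} (\<lambda>_. MX) \<Otimes>\<^sub>M PiM {1..j} (\<lambda>_. MY) \<Otimes>\<^sub>M PiM {1..j} (\<lambda>_. MYh))"
    define Hj where "Hj = gen M Vj NV"
    define S where "S = {\<omega>\<in>space M. X i \<omega> \<in> B}"
    have XLj: "AE \<omega> in M. cond_prob M Hj S \<omega> = measure (K i (X j \<omega>) (Yh j \<omega>)) B"
      using X_law[OF j B] unfolding Hj_def Vj_def NV_def S_def sj .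
    have Vj_M: "Vj \<in> measurable M NV"
      unfolding Vj_def NV_def
      by (intro measurable_Pair measurable_restrict) (use W_rv X_rv Y_rv Yh_rv j in auto)
    have sH: "subalgebra M Hj" unfolding Hj_def by (rule gen_subalg[OF Vj_M])
    interpret Hs: sigma_finite_subalgebra M Hj by (rule sfs[OF M sH])
    have ZpH: "Zp \<in> measurable Hj NZ" unfolding Hj_def
    proof (rule gen_meas[OF Vj_M, where g="\<lambda>v. restrict (\<lambda>l. (fst (snd v) l, fst (snd (snd v)) l)) {1..<i}"])
      show "(\<lambda>v. restrict (\<lambda>l. (fst (snd v) l, fst (snd (snd v)) l)) {1..<i}) \<in> measurable NV NZ"
        unfolding NV_def NZ_def
      proof (intro measurable_restrict measurable_Pair)
        fix l assume "l \<in> {1..<i}"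
        then have l: "l \<in> {1..j}" using sj by auto
        show "(\<lambda>v. fst (snd v) l) \<in> measurable (MW \<Otimes>\<^sub>M PiM {1..j} (\<lambda>_. MX) \<Otimes>\<^sub>M PiM {1..j} (\<lambda>_. MY) \<Otimes>\<^sub>M PiM {1..j} (\<lambda>_. MYh)) MX"
          using l by measurable
        show "(\<lambda>v. fst (snd (snd v)) l) \<in> measurable (MW \<Otimes>\<^sub>M PiM {1..j} (\<lambda>_. MX) \<Otimes>\<^sub>M PiM {1..j} (\<lambda>_. MY) \<Otimes>\<^sub>M PiM {1..j} (\<lambda>_. MYh)) MY"
          using l by measurable
      qed
      show "\<And>\<omega>. \<omega> \<in> space M \<Longrightarrow> Zp \<omega> = (\<lambda>v. restrict (\<lambda>l. (fst (snd v) l, fst (snd (snd v)) l)) {1..<i}) (Vj \<omega>)"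
        unfolding Zp_def Vj_def using sj by (auto simp: fun_eq_iff)
    qed
    have FH: "sets F \<subseteq> sets Hj" unfolding F_def by (rule gen_sub[OF ZpH]) (simp add: Hj_def)
    have WH: "W \<in> measurable Hj MW" unfolding Hj_def
      by (rule gen_meas[OF Vj_M, where g=fst]) (auto simp: NV_def Vj_def)
    have GH: "sets G \<subseteq> sets Hj" unfolding G_def by (rule gen_sub[OF WH]) (simp add: Hj_def)
    have pF: "(\<lambda>\<omega>. (X j \<omega>, Yh j \<omega>)) \<in> measurable F (MX \<Otimes>\<^sub>M MYh)"
      by (intro measurable_Pair XF YhF ji)
    have KF: "(\<lambda>\<omega>. K i (X j \<omega>) (Yh j \<omega>)) \<in> measurable F (prob_algebra MX)"
      using measurable_compose[OF pF K_kernel[OF i2]] by simp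
    have k0F: "(\<lambda>\<omega>. measure (K i (X j \<omega>) (Yh j \<omega>)) B) \<in> borel_measurable F"
      using measurable_compose[OF KF measurable_measure_prob_algebra[OF B]] by simp
    define k where "k = (\<lambda>\<omega>. if \<omega> \<in> space M then measure (K i (X j \<omega>) (Yh j \<omega>)) B else 0)"
    have kF: "k \<in> borel_measurable F"
      by (subst measurable_cong[where g="\<lambda>\<omega>. measure (K i (X j \<omega>) (Yh j \<omega>)) B"]) (use k0F spF in \<open>auto simp: k_def\<close>)
    have kM: "k \<in> borel_measurable M" by (rule measurable_from_subalg[OF sF kF])
    have kb: "\<bar>k x\<bar> \<le> 1" for x
    proof (cases "x \<in> space M")
      case True
      then have "K i (X j x) (Yh j x) \<in> space (prob_algebra MX)" using measurable_space[OF KF] spF by auto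
      then have "prob_space (K i (X j x) (Yh j x))" by (simp add: space_prob_algebra)
      then show ?thesis using True by (simp add: k_def prob_space.prob_le_1)
    qed (simp add: k_def)
    have SM: "S \<in> sets M" unfolding S_def using X_rv[OF i] B by measurable
    show ?thesis
    proof (intro exI conjI ballI allI)
      show "k \<in> borel_measurable F" by (rule kF)
      show "\<bar>k x\<bar> \<le> 1" for x by (rule kb)
      fix A C assume A: "A \<in> sets G" and C: "C \<in> sets F"
      have AH: "A \<in> sets Hj" using A GH by auto
      have CH: "C \<in> sets Hj" using C FH by auto
      have AM: "A \<in> sets M" using AH sH by (auto simp: subalgebra_def)
      have CM: "C \<in> sets M" using CH sH by (auto simp: subalgebra_def)
      have "(\<integral>x. indicator C x * indicator A x * indicator S x \<partial>M)
          = (\<integral>x. (indicator C x * indicator A x) * real_cond_exp M Hj (indicator S) x \<partial>M)"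
      proof (rule Hs.real_cond_exp_intg(2)[symmetric])
        show "integrable M (\<lambda>x. indicator C x * indicator A x * indicator S x :: real)"
          by (rule P.integrable_const_bound[where B=1]) (use AM CM SM in \<open>auto split: split_indicator\<close>)
        show "(\<lambda>x. indicator C x * indicator A x :: real) \<in> borel_measurable Hj" using AH CH by simp
        show "(indicator S :: 'a \<Rightarrow> real) \<in> borel_measurable M" using SM by simp
      qed
      also have "\<dots> = (\<integral>x. indicator C x * indicator A x * k x \<partial>M)"
      proof (rule integral_cong_AE)
        show "(\<lambda>x. indicator C x * indicator A x * real_cond_exp M Hj (indicator S) x) \<in> borel_measurable M"
          using AM CM by simp
        show "(\<lambda>x. indicator C x * indicator A x * k x) \<in> borel_measurable M" using AM CM kM by simp
        show "AE x in M. indicator C x * indicator A x * real_cond_exp M Hj (indicator S) x = indicator C x * indicator A x * k x"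
          using AE_space XLj by eventually_elim (auto simp: cond_prob_def k_def)
      qed
      finally show "(\<integral>x. indicator C x * indicator A x * indicator {\<omega>\<in>space M. X i \<omega> \<in> B} x \<partial>M)
            = (\<integral>x. indicator C x * indicator A x * k x \<partial>M)" unfolding S_def .
    qed
  qed
  show ?thesis
    unfolding F_def[symmetric] NZ_def[symmetric] Zp_def[symmetric] G_def[symmetric] H_def[symmetric]
  proof (rule ci_main[OF M sF X_rv[OF i]])
    show "sets G \<subseteq> sets M" unfolding G_def using gen_sub[OF W_rv] by simp
    show "space M \<in> sets G" using sets.top[of G] unfolding G_def by simp
    show "sets H \<subseteq> sigma_sets (space M) {C \<inter> {\<omega>\<in>space M. X i \<omega> \<in> B} | C B. C \<in> sets F \<and> B \<in> sets MX}"
      using HE unfolding E_def .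
    show "\<And>B. B \<in> sets MX \<Longrightarrow> \<exists>k::'a \<Rightarrow> real. k \<in> borel_measurable F \<and> (\<forall>x. \<bar>k x\<bar> \<le> 1) \<and>
       (\<forall>A\<in>sets G. \<forall>C\<in>sets F. (\<integral>x. indicator C x * indicator A x * indicator {\<omega>\<in>space M. X i \<omega> \<in> B} x \<partial>M)
            = (\<integral>x. indicator C x * indicator A x * k x \<partial>M))"
      by (rule kern)
  qed
qed

end
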